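(* For every integer $n\ge1$ and every $u\in V$, $\Pr(E_{2u})<\dfrac{9}{2\ln(n+1)}$.
   Context: For an integer $n\ge1$, the $n$-octahedral graph $G'_n=(V,E')$ is the undirected graph with vertex set $V=\{u\in\mathbb{Z}^3:|u_1|+|u_2|+|u_3|=n\}$ and edge set $E'=\{\{v,w\}\subset V: v\neq w,\ |v_i-w_i|\le 1 \text{ for all } i=1,2,3\}$. For $u,v\in V$, $d_{uv}$ denotes the shortest-path distance in $G'_n$, and $Z_u=\left(\sum_{w\in V\setminus\{u\}} d_{uw}^{-2}\right)^{-1}$. The OSW random graph $G_n=(V,E)$ is the directed graph in which, for every $\{u,v\}\in E'$, both $(u,v),(v,u)\in E$, and in addition each vertex $u\in V$, independently of the others, chooses one vertex $v\in V\setminus\{u\}$ with probability $Z_u d_{uv}^{-2}$ and the long-range edge $(u,v)$ is added; $C_{uv}$ denotes the event that $u$ chooses $v$. For an ordered pair $(x,y)$ of distinct vertices, say $(x,y)$ is of type $s$ if $\{x,y\}\in E'$, and of type $w$ if $d_{xy}\ge2$ and $C_{xy}$ occurs. A C3 rooted at $u$ of type $(t_1,t_2,t_3)\in\{s,w\}^3$ is a triple $(u,a,b)$ of pairwise distinct vertices such that $(u,a)$ is of type $t_1$, $(a,b)$ is of type $t_2$ and $(b,u)$ is of type $t_3$. $E_{2u}$ is the event that there exists a C3 rooted at $u$ of type $(s,w,s)$. *)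

theory Defs
  imports "HOL-Probability.Probability"
begin

type_synonym vtx = "int \<times> int \<times> int"

definition octV :: "nat \<Rightarrow> vtx set" where
  "octV n = {(x, y, z). \<bar>x\<bar> + \<bar>y\<bar> + \<bar>z\<bar> = int n}"

definition octAdj :: "nat \<Rightarrow> vtx \<Rightarrow> vtx \<Rightarrow> bool" where
  "octAdj n v w \<longleftrightarrow> v \<in> octV n \<and> w \<in> octV n \<and> v \<noteq> w \<and>
     \<bar>fst v - fst w\<bar> \<le> 1 \<and> \<bar>fst (snd v) - fst (snd w)\<bar> \<le> 1 \<and>
     \<bar>snd (snd v) - snd (snd w)\<bar> \<le> 1"

definition octDist :: "nat \<Rightarrow> vtx \<Rightarrow> vtx \<Rightarrow> nat" where
  "octDist n u v = (LEAST k. (u, v) \<in> ({(a, b). octAdj n a b}) ^^ k)"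

definition octZ :: "nat \<Rightarrow> vtx \<Rightarrow> real" where
  "octZ n u = inverse (\<Sum>w \<in> octV n - {u}. 1 / (real (octDist n u w))^2)"

definition choice_pmf :: "nat \<Rightarrow> vtx \<Rightarrow> vtx pmf" where
  "choice_pmf n u = embed_pmf (\<lambda>v. if v \<in> octV n - {u}
       then octZ n u / (real (octDist n u v))^2 else 0)"

text \<open>Joint (independent) choices of all vertices: an outcome is the function
  mapping each vertex u to the vertex it chooses (C_uv iff f u = v).\<close>
definition osw_pmf :: "nat \<Rightarrow> (vtx \<Rightarrow> vtx) pmf" where
  "osw_pmf n = Pi_pmf (octV n) (0, 0, 0) (choice_pmf n)"

definition type_s :: "nat \<Rightarrow> vtx \<Rightarrow> vtx \<Rightarrow> bool" where
  "type_s n x y \<longleftrightarrow> octAdj n x y"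

definition type_w :: "nat \<Rightarrow> (vtx \<Rightarrow> vtx) \<Rightarrow> vtx \<Rightarrow> vtx \<Rightarrow> bool" where
  "type_w n f x y \<longleftrightarrow> x \<in> octV n \<and> y \<in> octV n \<and> x \<noteq> y \<and> octDist n x y \<ge> 2 \<and> f x = y"

definition E2 :: "nat \<Rightarrow> vtx \<Rightarrow> (vtx \<Rightarrow> vtx) set" where
  "E2 n u = {f. \<exists>a b. u \<noteq> a \<and> u \<noteq> b \<and> a \<noteq> b \<and>
      type_s n u a \<and> type_w n f a b \<and> type_s n b u}"

end

theory Submission
  imports Defs "HOL-Analysis.Harmonic_Numbers"
begin

definition gg :: "int \<Rightarrow> int \<Rightarrow> int" where
  "gg s e = (if e = 0 then 0 else if s = 0 then 1 else s * e)"
definition dl :: "vtx list" where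
  "dl = [(x,y,z). x \<leftarrow> [-1,0,1], y \<leftarrow> [-1,0,1], z \<leftarrow> [-1,0,1]]"
definition okd :: "vtx \<Rightarrow> vtx \<Rightarrow> bool" where
  "okd s d \<longleftrightarrow> d \<noteq> (0,0,0) \<and> gg (fst s) (fst d) + gg (fst (snd s)) (fst (snd d)) + gg (snd (snd s)) (snd (snd d)) = 0"
definition farr :: "vtx \<Rightarrow> vtx \<Rightarrow> bool" where
  "farr d e \<longleftrightarrow> \<not> (\<bar>fst d - fst e\<bar> \<le> 1 \<and> \<bar>fst (snd d) - fst (snd e)\<bar> \<le> 1 \<and> \<bar>snd (snd d) - snd (snd e)\<bar> \<le> 1)"
definition dls :: "vtx \<Rightarrow> vtx list" where "dls s = filter (okd s) dl"
definition Ql :: "vtx \<Rightarrow> (vtx \<times> vtx) list" where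
  "Ql s = filter (\<lambda>(d,e). d \<noteq> e \<and> farr d e) (List.product (dls s) (dls s))"
lemma Ql_len: "s1 \<in> {-1,0,1} \<Longrightarrow> s2 \<in> {-1,0,1} \<Longrightarrow> s3 \<in> {-1,0,1} \<Longrightarrow> length (Ql (s1,s2,s3)) \<le> 18"
  by (elim insertE emptyE; hypsubst; code_simp)


lemma finite_octV: "finite (octV n)"
proof -
  have "octV n \<subseteq> {-int n..int n} \<times> {-int n..int n} \<times> {-int n..int n}"
    by (auto simp: octV_def)
  thus ?thesis by (rule finite_subset) auto
qed

lemma dist_le: "(u,v) \<in> {(a,b). octAdj n a b} ^^ k \<Longrightarrow> octDist n u v \<le> k"
  unfolding octDist_def by (rule Least_le)

lemma dist_pos:
  assumes "(u,v) \<in> {(a,b). octAdj n a b} ^^ k" "u \<noteq> v"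
  shows "1 \<le> octDist n u v"
proof -
  have "(u,v) \<in> {(a,b). octAdj n a b} ^^ octDist n u v" unfolding octDist_def by (rule LeastI[where P="\<lambda>k. (u,v) \<in> {(a,b). octAdj n a b} ^^ k", OF assms(1)])
  then show ?thesis using assms(2) by (cases "octDist n u v") auto
qed

lemma adj_dist: "octAdj n a b \<Longrightarrow> octDist n a b \<le> 1"
  by (rule dist_le) auto

definition S :: "nat \<Rightarrow> vtx \<Rightarrow> real" where
  "S n a = (\<Sum>w\<in>octV n - {a}. 1 / (real (octDist n a w))^2)"

lemma cone_bound:
  fixes c :: "nat \<Rightarrow> nat \<Rightarrow> vtx"
  assumes c00: "c 0 0 = a"
    and mem: "\<And>i j. i + j \<le> M \<Longrightarrow> c i j \<in> octV n"
    and stepi: "\<And>i j. i + j < M \<Longrightarrow> octAdj n (c i j) (c (Suc i) j)"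
    and stepj: "\<And>j. j < M \<Longrightarrow> octAdj n (c 0 j) (c 0 (Suc j))"
    and inj: "\<And>i j i' j'. i + j \<le> M \<Longrightarrow> i' + j' \<le> M \<Longrightarrow> c i j = c i' j' \<Longrightarrow> i = i' \<and> j = j'"
  shows "(\<Sum>k=1..M. (real k + 1) / (real k)^2) \<le> S n a"
proof -
  let ?R = "{(a,b). octAdj n a b}"
  have r0: "(a, c 0 j) \<in> ?R ^^ j" if "j \<le> M" for j
    using that
  proof (induction j)
    case 0 then show ?case using c00 by simp
  next
    case (Suc j)
    then have "(a, c 0 j) \<in> ?R ^^ j" by simp
    moreover have "(c 0 j, c 0 (Suc j)) \<in> ?R" using stepj Suc.prems by simp
    ultimately show ?case by auto
  qed
  have reach: "(a, c i j) \<in> ?R ^^ (i + j)" if "i + j \<le> M" for i j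
    using that
  proof (induction i)
    case 0 then show ?case using r0 by simp
  next
    case (Suc i)
    then have "(a, c i j) \<in> ?R ^^ (i + j)" by simp
    moreover have "(c i j, c (Suc i) j) \<in> ?R" using stepi Suc.prems by simp
    ultimately show ?case by auto
  qed
  define T where "T = Sigma {1..M} (\<lambda>k. {0..k})"
  define g where "g = (\<lambda>(k,i). c i (k - i))"
  have inj_g: "inj_on g T"
  proof (rule inj_onI)
    fix x y assume "x \<in> T" "y \<in> T" "g x = g y"
    then obtain k i k' i' where x: "x = (k,i)" "i \<le> k" "k \<le> M" and y: "y = (k',i')" "i' \<le> k'" "k' \<le> M"
      and e: "c i (k - i) = c i' (k' - i')"
      unfolding T_def g_def by auto
    from inj[OF _ _ e] x y have "i = i'" "k - i = k' - i'" by auto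
    with x y show "x = y" by auto
  qed
  have img: "g ` T \<subseteq> octV n - {a}"
  proof
    fix w assume "w \<in> g ` T"
    then obtain k i where w: "w = c i (k - i)" "i \<le> k" "k \<le> M" "1 \<le> k"
      unfolding T_def g_def by auto
    have "w \<in> octV n" using mem w by auto
    moreover have "w \<noteq> a"
    proof
      assume "w = a"
      then have "c i (k - i) = c 0 0" using w c00 by simp
      from inj[OF _ _ this] w show False by auto
    qed
    ultimately show "w \<in> octV n - {a}" by auto
  qed
  have dist: "octDist n a (g x) \<le> fst x \<and> 1 \<le> octDist n a (g x)" if "x \<in> T" for x
  proof -
    obtain k i where x: "x = (k,i)" "i \<le> k" "k \<le> M" "1 \<le> k" using \<open>x \<in> T\<close> unfolding T_def by auto
    have "(a, g x) \<in> ?R ^^ k" using reach[of i "k - i"] x unfolding g_def by auto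
    moreover have "g x \<noteq> a" using img \<open>x \<in> T\<close> by auto
    ultimately show ?thesis using dist_le dist_pos x by (metis fst_conv)
  qed
  have "(\<Sum>k=1..M. (real k + 1) / (real k)^2) = (\<Sum>k\<in>{1..M}. \<Sum>i\<in>{0..k}. 1 / (real k)^2)"
    by (simp add: divide_simps add.commute)
  also have "\<dots> = (\<Sum>x\<in>T. 1 / (real (fst x))^2)"
    unfolding T_def by (subst sum.Sigma) (auto simp: case_prod_beta)
  also have "\<dots> \<le> (\<Sum>x\<in>T. 1 / (real (octDist n a (g x)))^2)"
  proof (rule sum_mono)
    fix x assume "x \<in> T"
    with dist have d: "octDist n a (g x) \<le> fst x" "1 \<le> octDist n a (g x)" by auto
    then show "1 / (real (fst x))^2 \<le> 1 / (real (octDist n a (g x)))^2"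
      by (intro divide_left_mono power_mono) auto
  qed
  also have "\<dots> = (\<Sum>w\<in>g ` T. 1 / (real (octDist n a w))^2)"
    by (simp add: sum.reindex[OF inj_g])
  also have "\<dots> \<le> S n a"
    unfolding S_def by (rule sum_mono2) (use finite_octV img in auto)
  finally show ?thesis .
qed



lemma absA: "0 \<le> k \<Longrightarrow> k \<le> \<bar>x\<bar> \<Longrightarrow> \<bar>x - sgn x * k\<bar> = \<bar>x\<bar> - k" for x k :: int
  by (cases "x < 0"; cases "x = 0") (auto simp: sgn_if)
lemma absB: "0 \<le> k \<Longrightarrow> \<bar>y + (if y < 0 then -1 else 1) * k\<bar> = \<bar>y\<bar> + k" for y k :: int
  by auto

lemma cone_x:
  assumes a: "(x,y,z) \<in> octV n" and "\<bar>y\<bar> \<le> \<bar>x\<bar>" "\<bar>z\<bar> \<le> \<bar>x\<bar>" "1 \<le> n"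
  shows "\<exists>M\<ge>1. n \<le> 3*M \<and> (\<Sum>k=1..M. (real k + 1) / (real k)^2) \<le> S n (x,y,z)"
proof -
  have sum: "\<bar>x\<bar> + \<bar>y\<bar> + \<bar>z\<bar> = int n" using a by (simp add: octV_def)
  define M where "M = nat \<bar>x\<bar>"
  define ty :: int where "ty = (if y < 0 then -1 else 1)"
  define tz :: int where "tz = (if z < 0 then -1 else 1)"
  define c where "c = (\<lambda>i j::nat. (x - sgn x * int (i+j), y + ty * int i, z + tz * int j))"
  have M1: "1 \<le> M" "n \<le> 3*M" using sum assms(2-4) unfolding M_def by linarith+
  have mem: "c i j \<in> octV n" if "i + j \<le> M" for i j
  proof -
    have "\<bar>x - sgn x * int (i+j)\<bar> = \<bar>x\<bar> - int (i+j)" using that by (intro absA) (auto simp add: M_def)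
    moreover have "\<bar>y + ty * int i\<bar> = \<bar>y\<bar> + int i" unfolding ty_def by (intro absB) simp
    moreover have "\<bar>z + tz * int j\<bar> = \<bar>z\<bar> + int j" unfolding tz_def by (intro absB) simp
    ultimately show ?thesis using sum unfolding c_def octV_def by simp
  qed
  have tys: "ty \<noteq> 0" "\<bar>ty\<bar> \<le> 1" "tz \<noteq> 0" "\<bar>tz\<bar> \<le> 1" "\<bar>sgn x\<bar> \<le> 1"
    unfolding ty_def tz_def by (auto simp: abs_sgn_eq)
  show ?thesis
  proof (intro exI conjI)
    show "(\<Sum>k=1..M. (real k + 1) / (real k)^2) \<le> S n (x,y,z)"
    proof (rule cone_bound[where c = c])
      show "c 0 0 = (x,y,z)" unfolding c_def by simp
      show "c i j \<in> octV n" if "i + j \<le> M" for i j using mem that .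
      show "octAdj n (c i j) (c (Suc i) j)" if "i + j < M" for i j
        using mem[of i j] mem[of "Suc i" j] that tys unfolding octAdj_def
        by (auto simp: c_def algebra_simps)
      show "octAdj n (c 0 j) (c 0 (Suc j))" if "j < M" for j
        using mem[of 0 j] mem[of 0 "Suc j"] that tys unfolding octAdj_def
        by (auto simp: c_def algebra_simps)
      show "i = i' \<and> j = j'" if "c i j = c i' j'" for i j i' j'
        using that tys unfolding c_def by auto
    qed
  qed (use M1 in auto)
qed

lemma cone_y:
  assumes a: "(x,y,z) \<in> octV n" and "\<bar>x\<bar> \<le> \<bar>y\<bar>" "\<bar>z\<bar> \<le> \<bar>y\<bar>" "1 \<le> n"
  shows "\<exists>M\<ge>1. n \<le> 3*M \<and> (\<Sum>k=1..M. (real k + 1) / (real k)^2) \<le> S n (x,y,z)"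
proof -
  have sum: "\<bar>x\<bar> + \<bar>y\<bar> + \<bar>z\<bar> = int n" using a by (simp add: octV_def)
  define M where "M = nat \<bar>y\<bar>"
  define ty :: int where "ty = (if x < 0 then -1 else 1)"
  define tz :: int where "tz = (if z < 0 then -1 else 1)"
  define c where "c = (\<lambda>i j::nat. (x + ty * int i, y - sgn y * int (i+j), z + tz * int j))"
  have M1: "1 \<le> M" "n \<le> 3*M" using sum assms(2-4) unfolding M_def by linarith+
  have mem: "c i j \<in> octV n" if "i + j \<le> M" for i j
  proof -
    have "\<bar>y - sgn y * int (i+j)\<bar> = \<bar>y\<bar> - int (i+j)" using that by (intro absA) (auto simp add: M_def)
    moreover have "\<bar>x + ty * int i\<bar> = \<bar>x\<bar> + int i" unfolding ty_def by (intro absB) simp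
    moreover have "\<bar>z + tz * int j\<bar> = \<bar>z\<bar> + int j" unfolding tz_def by (intro absB) simp
    ultimately show ?thesis using sum unfolding c_def octV_def by simp
  qed
  have tys: "ty \<noteq> 0" "\<bar>ty\<bar> \<le> 1" "tz \<noteq> 0" "\<bar>tz\<bar> \<le> 1" "\<bar>sgn y\<bar> \<le> 1"
    unfolding ty_def tz_def by (auto simp: abs_sgn_eq)
  show ?thesis
  proof (intro exI conjI)
    show "(\<Sum>k=1..M. (real k + 1) / (real k)^2) \<le> S n (x,y,z)"
    proof (rule cone_bound[where c = c])
      show "c 0 0 = (x,y,z)" unfolding c_def by simp
      show "c i j \<in> octV n" if "i + j \<le> M" for i j using mem that .
      show "octAdj n (c i j) (c (Suc i) j)" if "i + j < M" for i j
        using mem[of i j] mem[of "Suc i" j] that tys unfolding octAdj_def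
        by (auto simp: c_def algebra_simps)
      show "octAdj n (c 0 j) (c 0 (Suc j))" if "j < M" for j
        using mem[of 0 j] mem[of 0 "Suc j"] that tys unfolding octAdj_def
        by (auto simp: c_def algebra_simps)
      show "i = i' \<and> j = j'" if "c i j = c i' j'" for i j i' j'
        using that tys unfolding c_def by auto
    qed
  qed (use M1 in auto)
qed

lemma cone_z:
  assumes a: "(x,y,z) \<in> octV n" and "\<bar>x\<bar> \<le> \<bar>z\<bar>" "\<bar>y\<bar> \<le> \<bar>z\<bar>" "1 \<le> n"
  shows "\<exists>M\<ge>1. n \<le> 3*M \<and> (\<Sum>k=1..M. (real k + 1) / (real k)^2) \<le> S n (x,y,z)"
proof -
  have sum: "\<bar>x\<bar> + \<bar>y\<bar> + \<bar>z\<bar> = int n" using a by (simp add: octV_def)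
  define M where "M = nat \<bar>z\<bar>"
  define ty :: int where "ty = (if x < 0 then -1 else 1)"
  define tz :: int where "tz = (if y < 0 then -1 else 1)"
  define c where "c = (\<lambda>i j::nat. (x + ty * int i, y + tz * int j, z - sgn z * int (i+j)))"
  have M1: "1 \<le> M" "n \<le> 3*M" using sum assms(2-4) unfolding M_def by linarith+
  have mem: "c i j \<in> octV n" if "i + j \<le> M" for i j
  proof -
    have "\<bar>z - sgn z * int (i+j)\<bar> = \<bar>z\<bar> - int (i+j)" using that by (intro absA) (auto simp add: M_def)
    moreover have "\<bar>x + ty * int i\<bar> = \<bar>x\<bar> + int i" unfolding ty_def by (intro absB) simp
    moreover have "\<bar>y + tz * int j\<bar> = \<bar>y\<bar> + int j" unfolding tz_def by (intro absB) simp
    ultimately show ?thesis using sum unfolding c_def octV_def by simp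
  qed
  have tys: "ty \<noteq> 0" "\<bar>ty\<bar> \<le> 1" "tz \<noteq> 0" "\<bar>tz\<bar> \<le> 1" "\<bar>sgn z\<bar> \<le> 1"
    unfolding ty_def tz_def by (auto simp: abs_sgn_eq)
  show ?thesis
  proof (intro exI conjI)
    show "(\<Sum>k=1..M. (real k + 1) / (real k)^2) \<le> S n (x,y,z)"
    proof (rule cone_bound[where c = c])
      show "c 0 0 = (x,y,z)" unfolding c_def by simp
      show "c i j \<in> octV n" if "i + j \<le> M" for i j using mem that .
      show "octAdj n (c i j) (c (Suc i) j)" if "i + j < M" for i j
        using mem[of i j] mem[of "Suc i" j] that tys unfolding octAdj_def
        by (auto simp: c_def algebra_simps)
      show "octAdj n (c 0 j) (c 0 (Suc j))" if "j < M" for j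
        using mem[of 0 j] mem[of 0 "Suc j"] that tys unfolding octAdj_def
        by (auto simp: c_def algebra_simps)
      show "i = i' \<and> j = j'" if "c i j = c i' j'" for i j i' j'
        using that tys unfolding c_def by auto
    qed
  qed (use M1 in auto)
qed


lemma S_lower:
  assumes "a \<in> octV n" "1 \<le> n"
  shows "\<exists>M\<ge>1. n \<le> 3*M \<and> (\<Sum>k=1..M. (real k + 1) / (real k)^2) \<le> S n a"
proof -
  obtain x y z where a: "a = (x,y,z)" by (cases a) auto
  consider "\<bar>y\<bar> \<le> \<bar>x\<bar> \<and> \<bar>z\<bar> \<le> \<bar>x\<bar>" | "\<bar>x\<bar> \<le> \<bar>y\<bar> \<and> \<bar>z\<bar> \<le> \<bar>y\<bar>" | "\<bar>x\<bar> \<le> \<bar>z\<bar> \<and> \<bar>y\<bar> \<le> \<bar>z\<bar>" by linarith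
  then show ?thesis using assms cone_x[of x y z n] cone_y[of x y z n] cone_z[of x y z n] unfolding a by blast+
qed



lemma ln3: "ln (3::real) < 5/4"
proof -
  have "(1 + (5/4) / real (8::nat)) ^ 8 \<le> exp (5/4::real)"
    by (rule exp_ge_one_plus_x_over_n_power_n) auto
  moreover have "(3::real) < (1 + (5/4) / real (8::nat)) ^ 8" by (simp add: power_def)
  ultimately have "3 < exp (5/4::real)" by linarith
  then show ?thesis by (metis exp_gt_zero ln_exp ln_less_cancel_iff zero_less_numeral)
qed

lemma ln4: "ln (4::real) < 2"
proof -
  have "(1 + 2 / real (4::nat)) ^ 4 \<le> exp (2::real)"
    by (rule exp_ge_one_plus_x_over_n_power_n) auto
  moreover have "(4::real) < (1 + 2 / real (4::nat)) ^ 4" by (simp add: power_def)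
  ultimately have "4 < exp (2::real)" by linarith
  then show ?thesis by (metis exp_gt_zero ln_exp ln_less_cancel_iff zero_less_numeral)
qed

lemma analytic:
  assumes "1 \<le> M" "n \<le> 3*M" "1 \<le> n"
  shows "ln (real n + 1) < (\<Sum>k=1..M. (real k + 1) / (real k)^2)"
proof -
  have split: "(\<Sum>k=1..M. (real k + 1) / (real k)^2) = harm M + (\<Sum>k=1..M. 1 / (real k)^2)"
    unfolding harm_def by (subst sum.distrib[symmetric]) (auto intro!: sum.cong simp: field_simps power2_eq_square)
  show ?thesis
  proof (cases "M = 1")
    case True
    then have "(\<Sum>k=1..M. (real k + 1) / (real k)^2) = 2" by simp
    moreover have "ln (real n + 1) \<le> ln 4" using assms True by simp
    ultimately show ?thesis using ln4 by linarith
  next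
    case False
    then have M2: "2 \<le> M" using assms by simp
    have "(\<Sum>k\<in>{1,2}. 1 / (real k)^2) \<le> (\<Sum>k=1..M. 1 / (real k)^2)"
      by (rule sum_mono2) (use M2 in auto)
    then have s2: "5/4 \<le> (\<Sum>k=1..M. 1 / (real k)^2)" by simp
    have h: "ln (real M + 1) \<le> harm M" by (rule ln_le_harm)
    have "ln (real n + 1) \<le> ln (3 * (real M + 1))" using assms by simp
    also have "\<dots> = ln 3 + ln (real M + 1)" using ln_mult[of 3 "real M + 1"] by simp
    finally show ?thesis using split s2 h ln3 by linarith
  qed
qed



lemma S_gt: "a \<in> octV n \<Longrightarrow> 1 \<le> n \<Longrightarrow> ln (real n + 1) < S n a"
  using S_lower[of a n] analytic by force

lemma pmf_choice:
  assumes "a \<in> octV n" "1 \<le> n"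
  shows "pmf (choice_pmf n a) b = (if b \<in> octV n - {a} then octZ n a / (real (octDist n a b))^2 else 0)"
proof -
  define f where "f = (\<lambda>v. if v \<in> octV n - {a} then octZ n a / (real (octDist n a v))^2 else 0)"
  have Spos: "0 < S n a" using S_gt[OF assms] assms(2) by (smt (verit) ln_ge_zero of_nat_0_le_iff)
  have Z: "octZ n a = inverse (S n a)" unfolding octZ_def S_def by simp
  have nn: "\<And>x. 0 \<le> f x" unfolding f_def Z using Spos by auto
  have "(\<integral>\<^sup>+x. ennreal (f x) \<partial>count_space UNIV) = (\<Sum>x\<in>octV n - {a}. ennreal (f x))"
    by (rule nn_integral_count_space') (auto simp: f_def finite_octV)
  also have "\<dots> = ennreal (\<Sum>x\<in>octV n - {a}. f x)" using nn by simp
  also have "(\<Sum>x\<in>octV n - {a}. f x) = octZ n a * S n a"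
    unfolding f_def S_def by (simp add: sum_distrib_left)
  also have "\<dots> = 1" using Z Spos by simp
  finally have int1: "(\<integral>\<^sup>+x. ennreal (f x) \<partial>count_space UNIV) = 1" by simp
  have "pmf (embed_pmf f) b = f b" by (rule pmf_embed_pmf[OF nn int1])
  then show ?thesis
    unfolding choice_pmf_def f_def[symmetric] by (simp add: f_def)
qed

lemma prob_comp:
  assumes "a \<in> octV n"
  shows "measure_pmf.prob (osw_pmf n) {f. f a = b} = pmf (choice_pmf n a) b"
proof -
  have "{f. f a = b} = (\<lambda>f. f a) -` {b}" by auto
  then have "measure_pmf.prob (osw_pmf n) {f. f a = b} = measure_pmf.prob (map_pmf (\<lambda>f. f a) (osw_pmf n)) {b}"
    by simp
  also have "map_pmf (\<lambda>f. f a) (osw_pmf n) = choice_pmf n a"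
    unfolding osw_pmf_def by (subst Pi_pmf_component[OF finite_octV]) (simp add: assms)
  finally show ?thesis by (simp add: measure_pmf_single)
qed

lemma gg_abs: "e \<in> {-1,0,1} \<Longrightarrow> \<bar>t + e\<bar> = \<bar>t\<bar> + gg (sgn t) e" for t e :: int
  by (auto simp: gg_def sgn_if)

lemma set_dl: "p \<in> {-1,0,1} \<Longrightarrow> q \<in> {-1,0,1} \<Longrightarrow> r \<in> {-1,0,1} \<Longrightarrow> (p,q,r) \<in> set dl"
  by (elim insertE emptyE; hypsubst; simp add: dl_def)

lemma abs1: "\<bar>t\<bar> \<le> 1 \<Longrightarrow> t \<in> {-1,0,1::int}" by auto

definition Pset :: "nat \<Rightarrow> vtx \<Rightarrow> (vtx \<times> vtx) set" where
  "Pset n u = {(a,b). octAdj n u a \<and> octAdj n b u \<and> a \<noteq> b \<and> 2 \<le> octDist n a b}"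

definition vadd :: "vtx \<Rightarrow> vtx \<Rightarrow> vtx" where
  "vadd u d = (fst u + fst d, fst (snd u) + fst (snd d), snd (snd u) + snd (snd d))"

lemma Pset_sub:
  assumes u: "u = (x,y,z)"
  shows "Pset n u \<subseteq> (\<lambda>(d,e). (vadd u d, vadd u e)) ` set (Ql (sgn x, sgn y, sgn z))"
proof
  fix p assume "p \<in> Pset n u"
  then obtain a1 a2 a3 b1 b2 b3 where p: "p = ((a1,a2,a3),(b1,b2,b3))"
    and h: "octAdj n u (a1,a2,a3)" "octAdj n (b1,b2,b3) u" "(a1,a2,a3) \<noteq> (b1,b2,b3)"
       "2 \<le> octDist n (a1,a2,a3) (b1,b2,b3)"
  proof -
    obtain a b where ab: "p = (a,b)" by (cases p)
    obtain a1 a2 a3 where a: "a = (a1,a2,a3)" by (cases a) auto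
    obtain b1 b2 b3 where b: "b = (b1,b2,b3)" by (cases b) auto
    show ?thesis using that \<open>p \<in> Pset n u\<close> unfolding Pset_def ab a b by blast
  qed
  define d where "d = (a1 - x, a2 - y, a3 - z)"
  define e where "e = (b1 - x, b2 - y, b3 - z)"
  have uV: "\<bar>x\<bar> + \<bar>y\<bar> + \<bar>z\<bar> = int n" using h(1) u by (simp add: octAdj_def octV_def)
  have aV: "\<bar>a1\<bar> + \<bar>a2\<bar> + \<bar>a3\<bar> = int n" using h(1) by (simp add: octAdj_def octV_def)
  have bV: "\<bar>b1\<bar> + \<bar>b2\<bar> + \<bar>b3\<bar> = int n" using h(2) by (simp add: octAdj_def octV_def)
  have da: "a1 - x \<in> {-1,0,1}" "a2 - y \<in> {-1,0,1}" "a3 - z \<in> {-1,0,1}"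
    using h(1) u by (auto simp: octAdj_def intro!: abs1)
  have db: "b1 - x \<in> {-1,0,1}" "b2 - y \<in> {-1,0,1}" "b3 - z \<in> {-1,0,1}"
    using h(2) u by (auto simp: octAdj_def intro!: abs1)
  have okd_d: "okd (sgn x, sgn y, sgn z) d"
  proof -
    have "d \<noteq> (0,0,0)" using h(1) u unfolding d_def octAdj_def by auto
    moreover have "\<bar>a1\<bar> = \<bar>x\<bar> + gg (sgn x) (a1 - x)" using gg_abs[OF da(1), of x] by simp
    moreover have "\<bar>a2\<bar> = \<bar>y\<bar> + gg (sgn y) (a2 - y)" using gg_abs[OF da(2), of y] by simp
    moreover have "\<bar>a3\<bar> = \<bar>z\<bar> + gg (sgn z) (a3 - z)" using gg_abs[OF da(3), of z] by simp
    ultimately show ?thesis using uV aV unfolding okd_def d_def by simp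
  qed
  have okd_e: "okd (sgn x, sgn y, sgn z) e"
  proof -
    have "e \<noteq> (0,0,0)" using h(2) u unfolding e_def octAdj_def by auto
    moreover have "\<bar>b1\<bar> = \<bar>x\<bar> + gg (sgn x) (b1 - x)" using gg_abs[OF db(1), of x] by simp
    moreover have "\<bar>b2\<bar> = \<bar>y\<bar> + gg (sgn y) (b2 - y)" using gg_abs[OF db(2), of y] by simp
    moreover have "\<bar>b3\<bar> = \<bar>z\<bar> + gg (sgn z) (b3 - z)" using gg_abs[OF db(3), of z] by simp
    ultimately show ?thesis using uV bV unfolding okd_def e_def by simp
  qed
  have far: "farr d e"
  proof (rule ccontr)
    assume "\<not> farr d e"
    then have "octAdj n (a1,a2,a3) (b1,b2,b3)"
      using h(1,2,3) unfolding farr_def d_def e_def octAdj_def by auto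
    then show False using adj_dist h(4) by fastforce
  qed
  have "d \<noteq> e" using h(3) unfolding d_def e_def by auto
  moreover have "d \<in> set dl" unfolding d_def by (rule set_dl[OF da])
  moreover have "e \<in> set dl" unfolding e_def by (rule set_dl[OF db])
  ultimately have "(d,e) \<in> set (Ql (sgn x, sgn y, sgn z))"
    using okd_d okd_e far unfolding Ql_def dls_def set_filter set_product mem_Collect_eq prod.case
    by blast
  moreover have "p = (vadd u d, vadd u e)" unfolding p vadd_def u d_def e_def by simp
  ultimately show "p \<in> (\<lambda>(d,e). (vadd u d, vadd u e)) ` set (Ql (sgn x, sgn y, sgn z))" by force
qed

lemma Pset_card: "finite (Pset n u) \<and> card (Pset n u) \<le> 18"
proof -
  obtain x y z where u: "u = (x,y,z)" by (cases u) auto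
  let ?I = "(\<lambda>(d,e). (vadd u d, vadd u e)) ` set (Ql (sgn x, sgn y, sgn z))"
  have "card ?I \<le> card (set (Ql (sgn x, sgn y, sgn z)))" by (rule card_image_le) simp
  also have "\<dots> \<le> length (Ql (sgn x, sgn y, sgn z))" by (rule card_length)
  also have "\<dots> \<le> 18" by (rule Ql_len) (auto simp: sgn_if)
  finally show ?thesis using Pset_sub[OF u] card_mono[of ?I "Pset n u"] finite_subset[of "Pset n u" ?I]
    by force
qed



lemma term_bound:
  assumes "(a,b) \<in> Pset n u" "1 \<le> n"
  shows "measure_pmf.prob (osw_pmf n) {f. f a = b} < 1 / (4 * ln (real n + 1))"
proof -
  from assms(1) have h: "octAdj n u a" "octAdj n b u" "a \<noteq> b" "2 \<le> octDist n a b"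
    unfolding Pset_def by auto
  have aV: "a \<in> octV n" and bV: "b \<in> octV n" using h(1,2) unfolding octAdj_def by auto
  have lnpos: "0 < ln (real n + 1)" using assms(2) by simp
  have Sgt: "ln (real n + 1) < S n a" by (rule S_gt[OF aV assms(2)])
  have Z: "octZ n a = inverse (S n a)" unfolding octZ_def S_def by simp
  have Zlt: "octZ n a < 1 / ln (real n + 1)"
    unfolding Z using Sgt lnpos by (simp add: inverse_eq_divide frac_less2)
  have Spos: "0 < S n a" using Sgt lnpos by linarith
  have Zpos: "0 \<le> octZ n a" unfolding Z using Spos by simp
  have d4: "4 \<le> (real (octDist n a b))^2"
  proof -
    have "(2::real)^2 \<le> (real (octDist n a b))^2" using h(4) by (intro power_mono) auto
    then show ?thesis by simp
  qed
  have "measure_pmf.prob (osw_pmf n) {f. f a = b} = octZ n a / (real (octDist n a b))^2"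
    using prob_comp[OF aV] pmf_choice[OF aV assms(2)] bV h(3) by simp
  also have "\<dots> \<le> octZ n a / 4" using d4 Zpos h(4) by (intro divide_left_mono) auto
  also have "\<dots> < 1 / (4 * ln (real n + 1))" using Zlt by simp
  finally show ?thesis .
qed

theorem lemma6:
  fixes n :: nat and u :: vtx
  assumes "n \<ge> 1" and "u \<in> octV n"
  shows "measure_pmf.prob (osw_pmf n) (E2 n u) < 9 / (2 * ln (real n + 1))"
proof -
  let ?P = "Pset n u"
  let ?c = "1 / (4 * ln (real n + 1))"
  have lnpos: "0 < ln (real n + 1)" using assms(1) by simp
  have fin: "finite ?P" and card: "card ?P \<le> 18" using Pset_card by auto
  have sub: "E2 n u \<subseteq> (\<Union>p\<in>?P. {f. f (fst p) = snd p})"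
    unfolding E2_def Pset_def type_s_def type_w_def by force
  have "measure_pmf.prob (osw_pmf n) (E2 n u) \<le> measure_pmf.prob (osw_pmf n) (\<Union>p\<in>?P. {f. f (fst p) = snd p})"
    by (rule measure_pmf.finite_measure_mono[OF sub]) simp
  also have "\<dots> \<le> (\<Sum>p\<in>?P. measure_pmf.prob (osw_pmf n) {f. f (fst p) = snd p})"
    by (rule measure_pmf.finite_measure_subadditive_finite[OF fin]) simp
  also have "\<dots> < 9 / (2 * ln (real n + 1))"
  proof (cases "?P = {}")
    case True then show ?thesis using lnpos by simp
  next
    case False
    have "(\<Sum>p\<in>?P. measure_pmf.prob (osw_pmf n) {f. f (fst p) = snd p}) < (\<Sum>p\<in>?P. ?c)"
      proof (rule sum_strict_mono[OF fin False])
      fix p assume "p \<in> ?P"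
      then have "(fst p, snd p) \<in> ?P" by simp
      from term_bound[OF this assms(1)]
      show "measure_pmf.prob (osw_pmf n) {f. f (fst p) = snd p} < ?c" .
    qed
    also have "\<dots> = real (card ?P) * ?c" by simp
    also have "\<dots> \<le> 18 * ?c" using card lnpos by (intro mult_right_mono) auto
    also have "\<dots> = 9 / (2 * ln (real n + 1))" by simp
    finally show ?thesis .
  qed
  finally show ?thesis .
qed

end
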